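(* Let $\Gamma$ be a finite simplicial graph satisfying (B1): for all non-adjacent $u,v\in V(\Gamma)$, $u\sim v$. Then for any $v\in V(\Gamma)$ with $\mathrm{st}(v)\ne\Gamma$, the graph $\Gamma-\mathrm{st}(v)$ is totally disconnected. In particular, there is a partial conjugation in $\mathrm{Aut}(A_\Gamma)$ of the form $c_{v,\{u\}}$ with $u\notin\mathrm{st}(v)$.
   Context: For $v\in V(\Gamma)$, $\mathrm{lk}(v)$ is the set of vertices adjacent to $v$ and $\mathrm{st}(v)=\mathrm{lk}(v)\cup\{v\}$ (also viewed as full subgraphs); $v\le w$ iff $\mathrm{lk}(v)\subset\mathrm{st}(w)$; $v\sim w$ iff $v\le w$ and $w\le v$. $A_\Gamma=\langle V(\Gamma)\mid [u,v]=1 \text{ whenever } u,v \text{ adjacent}\rangle$. For $v\in V(\Gamma)$ and a connected component $Y$ of $\Gamma-\mathrm{st}(v)$, the partial conjugation $c_{v,Y}$ maps $x\mapsto v^{-1}xv$ for $x\in Y$ and fixes the other vertices. *)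

theory Defs
  imports Main
begin

definition simplicial_graph :: "'a set \<Rightarrow> ('a \<Rightarrow> 'a \<Rightarrow> bool) \<Rightarrow> bool" where
  "simplicial_graph V E \<longleftrightarrow>
     (\<forall>x y. E x y \<longrightarrow> x \<in> V \<and> y \<in> V) \<and>
     (\<forall>x y. E x y \<longrightarrow> E y x) \<and> (\<forall>x. \<not> E x x)"

definition lk :: "'a set \<Rightarrow> ('a \<Rightarrow> 'a \<Rightarrow> bool) \<Rightarrow> 'a \<Rightarrow> 'a set" where
  "lk V E v = {w \<in> V. E v w}"

definition st :: "'a set \<Rightarrow> ('a \<Rightarrow> 'a \<Rightarrow> bool) \<Rightarrow> 'a \<Rightarrow> 'a set" where
  "st V E v = insert v (lk V E v)"

definition vle :: "'a set \<Rightarrow> ('a \<Rightarrow> 'a \<Rightarrow> bool) \<Rightarrow> 'a \<Rightarrow> 'a \<Rightarrow> bool" where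
  "vle V E v w \<longleftrightarrow> lk V E v \<subseteq> st V E w"

definition vequiv :: "'a set \<Rightarrow> ('a \<Rightarrow> 'a \<Rightarrow> bool) \<Rightarrow> 'a \<Rightarrow> 'a \<Rightarrow> bool" where
  "vequiv V E v w \<longleftrightarrow> vle V E v w \<and> vle V E w v"

definition condB1 :: "'a set \<Rightarrow> ('a \<Rightarrow> 'a \<Rightarrow> bool) \<Rightarrow> bool" where
  "condB1 V E \<longleftrightarrow> (\<forall>u\<in>V. \<forall>v\<in>V. \<not> E u v \<longrightarrow> vequiv V E u v)"

definition induced :: "'a set \<Rightarrow> ('a \<Rightarrow> 'a \<Rightarrow> bool) \<Rightarrow> 'a \<Rightarrow> 'a \<Rightarrow> bool" where
  "induced S E x y \<longleftrightarrow> x \<in> S \<and> y \<in> S \<and> E x y"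

definition totally_disconnected :: "'a set \<Rightarrow> ('a \<Rightarrow> 'a \<Rightarrow> bool) \<Rightarrow> bool" where
  "totally_disconnected S F \<longleftrightarrow> (\<forall>x\<in>S. \<forall>y\<in>S. \<not> F x y)"

definition component_of :: "'a set \<Rightarrow> ('a \<Rightarrow> 'a \<Rightarrow> bool) \<Rightarrow> 'a \<Rightarrow> 'a set" where
  "component_of S F x = {y \<in> S. (induced S F)\<^sup>*\<^sup>* x y}"

definition is_component :: "'a set \<Rightarrow> ('a \<Rightarrow> 'a \<Rightarrow> bool) \<Rightarrow> 'a set \<Rightarrow> bool" where
  "is_component S F Y \<longleftrightarrow> (\<exists>x\<in>S. Y = component_of S F x)"

text \<open>Partial conjugation data: the partial conjugation c_{v,Y} exists (as an
automorphism of A_Gamma) exactly when v is a vertex and Y is a connected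
component of Gamma - st(v).\<close>
definition is_partial_conjugation :: "'a set \<Rightarrow> ('a \<Rightarrow> 'a \<Rightarrow> bool) \<Rightarrow> 'a \<Rightarrow> 'a set \<Rightarrow> bool" where
  "is_partial_conjugation V E v Y \<longleftrightarrow>
     v \<in> V \<and> is_component (V - st V E v) (induced (V - st V E v) E) Y"

end

theory Submission
  imports Defs
begin

theorem lemma3p5:
  fixes V :: "'a set" and E :: "'a \<Rightarrow> 'a \<Rightarrow> bool" and v :: 'a
  assumes "finite V" and "simplicial_graph V E" and "condB1 V E"
    and "v \<in> V" and "st V E v \<noteq> V"
  shows "totally_disconnected (V - st V E v) (induced (V - st V E v) E)
     \<and> (\<exists>u. u \<in> V \<and> u \<notin> st V E v \<and> is_partial_conjugation V E v {u})"
proof -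
  let ?S = "V - st V E v"
  have noE: "\<not> E x y" if "x \<in> ?S" "y \<in> ?S" for x y
  proof
    assume e: "E x y"
    have "\<not> E x v" using that assms(2) unfolding st_def lk_def simplicial_graph_def by auto
    hence "vequiv V E x v" using assms(3,4) that unfolding condB1_def by auto
    hence "lk V E x \<subseteq> st V E v" unfolding vequiv_def vle_def by auto
    moreover have "y \<in> lk V E x" using e that unfolding lk_def by auto
    ultimately show False using that by auto
  qed
  have td: "totally_disconnected ?S (induced ?S E)"
    unfolding totally_disconnected_def induced_def using noE by auto
  have "st V E v \<subseteq> V" using assms(4) unfolding st_def lk_def by auto
  then obtain u where u: "u \<in> V" "u \<notin> st V E v" using assms(5) by auto
  have rt: "(induced ?S (induced ?S E))\<^sup>*\<^sup>* u y \<Longrightarrow> y = u" for y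
  proof (induction rule: rtranclp_induct)
    case (step y z) thus ?case using noE unfolding induced_def by auto
  qed simp
  have "component_of ?S (induced ?S E) u = {u}"
    unfolding component_of_def using rt u by auto
  hence "is_partial_conjugation V E v {u}"
    unfolding is_partial_conjugation_def is_component_def using u assms(4) by force
  thus ?thesis using td u by auto
qed

end
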